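(* Assume $R_1(i)\neq 0$ for $2\le i\le I-1$, $R_2(j)\neq0$ for $2\le j\le J-1$, and that the real parameters $\alpha,\beta$ satisfy $(\alpha+1)R_1(I-1)+(\eta_1-\epsilon_1)\neq0$ and $(\beta-1)R_2(2)+(\eta_2+\epsilon_2)\neq0$. Let $(e_1^m,e_2^m)_{m\ge0}$ be the error iterates of the implicit Schwarz iteration with the Robin-type (optimized) interface condition defined below. Then, with $$\bar\rho=-\frac{(\alpha+1)(\eta_2+\epsilon_2)-R_2(2)}{(\alpha+1)R_1(I-1)+\eta_1-\epsilon_1}\cdot\frac{(\beta-1)(\eta_1-\epsilon_1)-R_1(I-1)}{(\beta-1)R_2(2)+\eta_2+\epsilon_2},$$ one has, for every $m\ge1$, $e_{1,i}^{m+2}=\bar\rho\,e_{1,i}^m$ for all $1\le i\le I$ and $e_{2,j}^{m+2}=\bar\rho\,e_{2,j}^m$ for all $1\le j\le J$.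
   Context: Setting (implicit scheme, constant coefficients). Integers $I,J\ge3$; grid 1 has nodes $1,\dots,I$, grid 2 has nodes $1,\dots,J$, with node $I-1$ of grid 1 coinciding with node 1 of grid 2 and node $I$ of grid 1 coinciding with node 2 of grid 2. Real constants $\eta_k,\epsilon_k,\gamma_k$ ($k=1,2$). Define recursively $R_1(2)=1+2\epsilon_1+\gamma_1$, $R_1(i)=1+2\epsilon_1+\gamma_1+\dfrac{\eta_1^2-\epsilon_1^2}{R_1(i-1)}$ for $i=3,\dots,I-1$; $R_2(J-1)=1+2\epsilon_2+\gamma_2$, $R_2(j)=1+2\epsilon_2+\gamma_2+\dfrac{\eta_2^2-\epsilon_2^2}{R_2(j+1)}$ for $j=J-2,\dots,2$. Error iteration with optimized interface condition (parameters $\alpha,\beta\in\mathbb R$): $e_1^0\in\mathbb R^I$, $e_2^0\in\mathbb R^J$ arbitrary; for $m\ge1$: $e_{1,1}^m=0$; $-(\eta_1+\epsilon_1)e_{1,i-1}^m+(1+2\epsilon_1+\gamma_1)e_{1,i}^m+(\eta_1-\epsilon_1)e_{1,i+1}^m=0$ for $2\le i\le I-1$; $(e_{1,I}^m-e_{1,I-1}^m)+\alpha e_{1,I}^m=(e_{2,2}^{m-1}-e_{2,1}^{m-1})+\alpha e_{2,2}^{m-1}$; $e_{2,J}^m=0$; $-(\eta_2+\epsilon_2)e_{2,j-1}^m+(1+2\epsilon_2+\gamma_2)e_{2,j}^m+(\eta_2-\epsilon_2)e_{2,j+1}^m=0$ for $2\le j\le J-1$; $(e_{2,2}^m-e_{2,1}^m)+\beta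 e_{2,1}^m=(e_{1,I}^{m-1}-e_{1,I-1}^{m-1})+\beta e_{1,I-1}^{m-1}$. *)

theory Defs
  imports Complex_Main
begin

fun R1 :: "real \<Rightarrow> real \<Rightarrow> real \<Rightarrow> nat \<Rightarrow> real" where
  "R1 eta eps gam i =
     (if i \<le> 2 then 1 + 2*eps + gam
      else 1 + 2*eps + gam + (eta^2 - eps^2) / R1 eta eps gam (i - 1))"

text \<open>Backward recursion indexed by distance k = J-1-j from the right end.\<close>
fun R2aux :: "real \<Rightarrow> real \<Rightarrow> real \<Rightarrow> nat \<Rightarrow> real" where
  "R2aux eta eps gam 0 = 1 + 2*eps + gam"
| "R2aux eta eps gam (Suc k) = 1 + 2*eps + gam + (eta^2 - eps^2) / R2aux eta eps gam k"

definition R2 :: "real \<Rightarrow> real \<Rightarrow> real \<Rightarrow> nat \<Rightarrow> nat \<Rightarrow> real" where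
  "R2 eta eps gam J j = R2aux eta eps gam (J - 1 - j)"

end

theory Submission
  imports Defs
begin

declare R1.simps[simp del]

lemma R1_step: "i \<ge> 3 \<Longrightarrow> R1 eta eps gam i = 1 + 2*eps + gam + (eta^2 - eps^2) / R1 eta eps gam (i - 1)"
  by (subst R1.simps) simp

lemma R1_base: "R1 eta eps gam 2 = 1 + 2*eps + gam"
  by (subst R1.simps) simp

lemma fwd1:
  fixes z :: "nat \<Rightarrow> real"
  assumes z1: "z 1 = 0"
    and eq: "\<And>i. 2 \<le> i \<Longrightarrow> i \<le> N \<Longrightarrow> - (eta + eps) * z (i - 1) + (1 + 2*eps + gam) * z i + (eta - eps) * z (i + 1) = 0"
    and nz: "\<And>i. 2 \<le> i \<Longrightarrow> i \<le> N \<Longrightarrow> R1 eta eps gam i \<noteq> 0"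
    and i2: "2 \<le> i"
  shows "i \<le> N \<longrightarrow> R1 eta eps gam i * z i + (eta - eps) * z (i + 1) = 0"
  using i2
proof (induction i rule: nat_induct_at_least)
  case base
  show ?case using eq[of 2] z1 by (simp add: R1_base)
next
  case (Suc n)
  show ?case
  proof
    assume h: "Suc n \<le> N"
    have IH: "R1 eta eps gam n * z n + (eta - eps) * z (n + 1) = 0" using Suc h by simp
    have rn: "R1 eta eps gam n \<noteq> 0" using nz Suc h by simp
    have zn: "z n = - (eta - eps) * z (Suc n) / R1 eta eps gam n"
      using IH rn by (simp add: field_simps)
    have e: "- (eta + eps) * z n + (1 + 2*eps + gam) * z (Suc n) + (eta - eps) * z (Suc n + 1) = 0"
      using eq[of "Suc n"] Suc h by simp
    have r: "R1 eta eps gam (Suc n) = 1 + 2*eps + gam + (eta^2 - eps^2) / R1 eta eps gam n"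
      using R1_step[of "Suc n"] Suc by simp
    show "R1 eta eps gam (Suc n) * z (Suc n) + (eta - eps) * z (Suc n + 1) = 0"
      using e unfolding r zn using rn by (simp add: field_simps power2_eq_square)
  qed
qed

lemma zero1:
  fixes z :: "nat \<Rightarrow> real"
  assumes I3: "I \<ge> 3" and z1: "z 1 = 0" and zI: "z I = 0"
    and eq: "\<And>i. 2 \<le> i \<Longrightarrow> i \<le> I - 1 \<Longrightarrow> - (eta + eps) * z (i - 1) + (1 + 2*eps + gam) * z i + (eta - eps) * z (i + 1) = 0"
    and nz: "\<And>i. 2 \<le> i \<Longrightarrow> i \<le> I - 1 \<Longrightarrow> R1 eta eps gam i \<noteq> 0"
    and i: "1 \<le> i" "i \<le> I"
  shows "z i = 0"
proof -
  have k: "\<forall>k. k \<le> I - 2 \<longrightarrow> z (I - k) = 0"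
  proof
    fix k show "k \<le> I - 2 \<longrightarrow> z (I - k) = 0"
    proof (induction k)
      case 0 then show ?case using zI by simp
    next
      case (Suc k)
      show ?case
      proof
        assume h: "Suc k \<le> I - 2"
        have zk: "z (I - k) = 0" using Suc h by simp
        have f: "R1 eta eps gam (I - Suc k) * z (I - Suc k) + (eta - eps) * z (I - Suc k + 1) = 0"
          using fwd1[OF z1 eq nz, of "I - Suc k"] h by simp
        have "I - Suc k + 1 = I - k" using h by simp
        with f zk have "R1 eta eps gam (I - Suc k) * z (I - Suc k) = 0" by simp
        moreover have "R1 eta eps gam (I - Suc k) \<noteq> 0" using nz h by simp
        ultimately show "z (I - Suc k) = 0" by simp
      qed
    qed
  qed
  show ?thesis
  proof (cases "i = 1")
    case True then show ?thesis using z1 by simp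
  next
    case False
    then have "I - i \<le> I - 2" "I - (I - i) = i" using i by auto
    then show ?thesis using k by metis
  qed
qed

lemma bwd2:
  fixes z :: "nat \<Rightarrow> real"
  assumes J3: "J \<ge> 3" and zJ: "z J = 0"
    and eq: "\<And>j. 2 \<le> j \<Longrightarrow> j \<le> J - 1 \<Longrightarrow> - (eta + eps) * z (j - 1) + (1 + 2*eps + gam) * z j + (eta - eps) * z (j + 1) = 0"
    and nz: "\<And>j. 2 \<le> j \<Longrightarrow> j \<le> J - 1 \<Longrightarrow> R2 eta eps gam J j \<noteq> 0"
  shows "k \<le> J - 3 \<longrightarrow> R2aux eta eps gam k * z (J - 1 - k) - (eta + eps) * z (J - 2 - k) = 0"
proof (induction k)
  case 0
  have "J - 1 + 1 = J" "J - 1 - 1 = J - 2" "2 \<le> J - 1" using J3 by auto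
  then have "- (eta + eps) * z (J - 2) + (1 + 2*eps + gam) * z (J - 1) = 0"
    using eq[of "J - 1"] zJ by simp
  then show ?case by (simp add: algebra_simps)
next
  case (Suc k)
  show ?case
  proof
    assume h: "Suc k \<le> J - 3"
    define j where "j = J - 2 - k"
    have j2: "2 \<le> j" "j \<le> J - 1" using h J3 unfolding j_def by auto
    have jj: "J - 1 - k = j + 1" "J - 1 - Suc k = j" "J - 2 - Suc k = j - 1" using h J3 unfolding j_def by auto
    have IH: "R2aux eta eps gam k * z (j + 1) - (eta + eps) * z j = 0" using Suc h jj by simp
    have rk: "R2aux eta eps gam k \<noteq> 0"
    proof -
      have "J - 1 - (j + 1) = k" "2 \<le> j + 1" "j + 1 \<le> J - 1" using h J3 unfolding j_def by auto
      then show ?thesis using nz[of "j + 1"] unfolding R2_def by simp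
    qed
    have zj1: "z (j + 1) = (eta + eps) * z j / R2aux eta eps gam k" using IH rk by (simp add: field_simps)
    have e: "- (eta + eps) * z (j - 1) + (1 + 2*eps + gam) * z j + (eta - eps) * z (j + 1) = 0"
      using eq j2 by simp
    show "R2aux eta eps gam (Suc k) * z (J - 1 - Suc k) - (eta + eps) * z (J - 2 - Suc k) = 0"
      unfolding jj using e unfolding zj1 using rk
      by (simp add: field_simps power2_eq_square)
  qed
qed

lemma zero2:
  fixes z :: "nat \<Rightarrow> real"
  assumes J3: "J \<ge> 3" and zJ: "z J = 0" and z1: "z 1 = 0"
    and eq: "\<And>j. 2 \<le> j \<Longrightarrow> j \<le> J - 1 \<Longrightarrow> - (eta + eps) * z (j - 1) + (1 + 2*eps + gam) * z j + (eta - eps) * z (j + 1) = 0"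
    and nz: "\<And>j. 2 \<le> j \<Longrightarrow> j \<le> J - 1 \<Longrightarrow> R2 eta eps gam J j \<noteq> 0"
    and j: "1 \<le> j" "j \<le> J"
  shows "z j = 0"
proof -
  have r: "R2 eta eps gam J j * z j - (eta + eps) * z (j - 1) = 0" if "2 \<le> j" "j \<le> J - 1" for j
  proof -
    have "J - 1 - (J - 1 - j) = j" "J - 2 - (J - 1 - j) = j - 1" "J - 1 - j \<le> J - 3" using that by auto
    then show ?thesis using bwd2[OF J3 zJ eq nz, of "J - 1 - j"] unfolding R2_def by simp
  qed
  have u: "\<forall>j. 1 \<le> j \<and> j \<le> J - 1 \<longrightarrow> z j = 0"
  proof
    fix j show "1 \<le> j \<and> j \<le> J - 1 \<longrightarrow> z j = 0"
    proof (induction j)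
      case 0 then show ?case by simp
    next
      case (Suc n)
      show ?case
      proof
        assume h: "1 \<le> Suc n \<and> Suc n \<le> J - 1"
        show "z (Suc n) = 0"
        proof (cases "n = 0")
          case True then show ?thesis using z1 by simp
        next
          case False
          then have "z n = 0" using Suc h by simp
          moreover have "R2 eta eps gam J (Suc n) * z (Suc n) - (eta + eps) * z n = 0"
            using r[of "Suc n"] h False by simp
          moreover have "R2 eta eps gam J (Suc n) \<noteq> 0" using nz h False by simp
          ultimately show ?thesis by simp
        qed
      qed
    qed
  qed
  show ?thesis using u zJ j by (cases "j = J") auto
qed

theorem proposition4p2:
  fixes I J :: nat
    and eta1 eps1 gam1 eta2 eps2 gam2 \<alpha> \<beta> \<rho> :: real
    and e1 e2 :: "nat \<Rightarrow> nat \<Rightarrow> real"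
  assumes I3: "I \<ge> 3" and J3: "J \<ge> 3"
    and R1nz: "\<And>i. 2 \<le> i \<Longrightarrow> i \<le> I - 1 \<Longrightarrow> R1 eta1 eps1 gam1 i \<noteq> 0"
    and R2nz: "\<And>j. 2 \<le> j \<Longrightarrow> j \<le> J - 1 \<Longrightarrow> R2 eta2 eps2 gam2 J j \<noteq> 0"
    and A: "(\<alpha> + 1) * R1 eta1 eps1 gam1 (I - 1) + (eta1 - eps1) \<noteq> 0"
    and B: "(\<beta> - 1) * R2 eta2 eps2 gam2 J 2 + (eta2 + eps2) \<noteq> 0"
    and bc1: "\<And>m. m \<ge> 1 \<Longrightarrow> e1 m 1 = 0"
    and int1: "\<And>m i. m \<ge> 1 \<Longrightarrow> 2 \<le> i \<Longrightarrow> i \<le> I - 1 \<Longrightarrow>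
        - (eta1 + eps1) * e1 m (i - 1) + (1 + 2*eps1 + gam1) * e1 m i
          + (eta1 - eps1) * e1 m (i + 1) = 0"
    and if1: "\<And>m. m \<ge> 1 \<Longrightarrow>
        (e1 m I - e1 m (I - 1)) + \<alpha> * e1 m I
          = (e2 (m - 1) 2 - e2 (m - 1) 1) + \<alpha> * e2 (m - 1) 2"
    and bc2: "\<And>m. m \<ge> 1 \<Longrightarrow> e2 m J = 0"
    and int2: "\<And>m j. m \<ge> 1 \<Longrightarrow> 2 \<le> j \<Longrightarrow> j \<le> J - 1 \<Longrightarrow>
        - (eta2 + eps2) * e2 m (j - 1) + (1 + 2*eps2 + gam2) * e2 m j
          + (eta2 - eps2) * e2 m (j + 1) = 0"
    and if2: "\<And>m. m \<ge> 1 \<Longrightarrow>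
        (e2 m 2 - e2 m 1) + \<beta> * e2 m 1
          = (e1 (m - 1) I - e1 (m - 1) (I - 1)) + \<beta> * e1 (m - 1) (I - 1)"
    and rho: "\<rho> = - (((\<alpha> + 1) * (eta2 + eps2) - R2 eta2 eps2 gam2 J 2)
                     / ((\<alpha> + 1) * R1 eta1 eps1 gam1 (I - 1) + eta1 - eps1))
                 * (((\<beta> - 1) * (eta1 - eps1) - R1 eta1 eps1 gam1 (I - 1))
                     / ((\<beta> - 1) * R2 eta2 eps2 gam2 J 2 + eta2 + eps2))"
  shows "\<forall>m \<ge> 1. (\<forall>i. 1 \<le> i \<and> i \<le> I \<longrightarrow> e1 (m + 2) i = \<rho> * e1 m i)
                 \<and> (\<forall>j. 1 \<le> j \<and> j \<le> J \<longrightarrow> e2 (m + 2) j = \<rho> * e2 m j)"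
proof (intro allI impI)
  fix m :: nat assume m1: "m \<ge> 1"
  define a where "a = R1 eta1 eps1 gam1 (I - 1)"
  define b where "b = eta1 - eps1"
  define c where "c = R2 eta2 eps2 gam2 J 2"
  define d where "d = eta2 + eps2"
  have anz: "a \<noteq> 0" unfolding a_def using R1nz I3 by simp
  have cnz: "c \<noteq> 0" unfolding c_def using R2nz J3 by simp
  have An: "(\<alpha> + 1) * a + b \<noteq> 0" using A unfolding a_def b_def by simp
  have Bn: "(\<beta> - 1) * c + d \<noteq> 0" using B unfolding c_def d_def by simp
  have rho': "\<rho> = - (((\<alpha>+1)*d - c)/((\<alpha>+1)*a+b)) * (((\<beta>-1)*b - a)/((\<beta>-1)*c+d))"
    unfolding rho a_def b_def c_def d_def by (simp only: add_diff_eq add.assoc)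
  have F1: "a * e1 n (I - 1) + b * e1 n I = 0" if "n \<ge> 1" for n
  proof -
    have s: "Suc (I - 1) = I" "2 \<le> I - 1" using I3 by auto
    have "R1 eta1 eps1 gam1 (I - 1) * e1 n (I - 1) + (eta1 - eps1) * e1 n (I - 1 + 1) = 0"
      using fwd1[OF bc1[OF that] int1[OF that] R1nz, where i="I - 1"] s by simp
    then show ?thesis using s unfolding a_def b_def by simp
  qed
  have F2: "c * e2 n 2 - d * e2 n 1 = 0" if "n \<ge> 1" for n
  proof -
    have "J - 1 - (J - 3) = 2" "J - 2 - (J - 3) = 1" using J3 by auto
    then have "R2aux eta2 eps2 gam2 (J - 3) * e2 n 2 - (eta2 + eps2) * e2 n 1 = 0"
      using bwd2[OF J3 bc2[OF that] int2[OF that] R2nz, of "J - 3"] by simp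
    moreover have "J - 1 - 2 = J - 3" by simp
    ultimately show ?thesis unfolding c_def d_def R2_def by simp
  qed
  have E1: "((\<alpha> + 1) * a + b) * e1 n I = a * ((\<alpha> + 1) * e2 (n - 1) 2 - e2 (n - 1) 1)" if "n \<ge> 1" for n
  proof -
    have h: "a * ((e1 n I - e1 n (I - 1)) + \<alpha> * e1 n I)
          = a * ((e2 (n - 1) 2 - e2 (n - 1) 1) + \<alpha> * e2 (n - 1) 2)" using if1[OF that] by simp
    have f: "a * e1 n (I - 1) = - b * e1 n I" using F1[OF that] by linarith
    show ?thesis using h f by (simp add: algebra_simps)
  qed
  have E2: "((\<beta> - 1) * c + d) * e2 n 1 = c * (e1 (n - 1) I + (\<beta> - 1) * e1 (n - 1) (I - 1))" if "n \<ge> 1" for n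
  proof -
    have h: "c * ((e2 n 2 - e2 n 1) + \<beta> * e2 n 1)
          = c * ((e1 (n - 1) I - e1 (n - 1) (I - 1)) + \<beta> * e1 (n - 1) (I - 1))" using if2[OF that] by simp
    have f: "c * e2 n 2 = d * e2 n 1" using F2[OF that] by linarith
    show ?thesis using h f by (simp add: algebra_simps)
  qed
  define A' where "A' = (\<alpha> + 1) * a + b"
  define B' where "B' = (\<beta> - 1) * c + d"
  define X where "X = (\<alpha>+1)*d - c"
  define Y where "Y = (\<beta>-1)*b - a"
  have rr: "\<rho> * p = - (X * Y * p) / (A' * B')" for p
    unfolding rho' X_def Y_def A'_def B'_def by simp
  have An': "A' \<noteq> 0" and Bn': "B' \<noteq> 0" using An Bn unfolding A'_def B'_def by auto
  have fin: "q = \<rho> * p" if "A' * B' * q = - (X * Y * p)" for p q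
    unfolding rr using that An' Bn' by (simp add: field_simps)
  have G1: "e1 (n + 2) I = \<rho> * e1 n I" if n1: "n \<ge> 1" for n
  proof (rule fin)
    have x1: "a * e1 n (I - 1) + b * e1 n I = 0" using F1[OF n1] .
    have y1: "B' * e2 (n + 1) 1 = c * (e1 n I + (\<beta> - 1) * e1 n (I - 1))"
      using E2[of "n + 1"] unfolding B'_def by simp
    have y2: "c * e2 (n + 1) 2 - d * e2 (n + 1) 1 = 0" using F2[of "n + 1"] by simp
    have q: "A' * e1 (n + 2) I = a * ((\<alpha> + 1) * e2 (n + 1) 2 - e2 (n + 1) 1)"
      using E1[of "n + 2"] unfolding A'_def by simp
    have k1: "c * (A' * e1 (n + 2) I) = a * X * e2 (n + 1) 1"
      using q y2 unfolding X_def by algebra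
    have k2: "c * (A' * B' * e1 (n + 2) I) = c * (- (X * Y * e1 n I))"
      using k1 y1 x1 unfolding Y_def by algebra
    show "A' * B' * e1 (n + 2) I = - (X * Y * e1 n I)" using k2 mult_left_cancel[OF cnz] by blast
  qed
  have G2: "e2 (n + 2) 1 = \<rho> * e2 n 1" if n1: "n \<ge> 1" for n
  proof (rule fin)
    have y2: "c * e2 n 2 - d * e2 n 1 = 0" using F2[OF n1] .
    have q: "A' * e1 (n + 1) I = a * ((\<alpha> + 1) * e2 n 2 - e2 n 1)"
      using E1[of "n + 1"] unfolding A'_def by simp
    have x1: "a * e1 (n + 1) (I - 1) + b * e1 (n + 1) I = 0" using F1[of "n + 1"] by simp
    have y1: "B' * e2 (n + 2) 1 = c * (e1 (n + 1) I + (\<beta> - 1) * e1 (n + 1) (I - 1))"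
      using E2[of "n + 2"] unfolding B'_def by simp
    have k1: "c * (A' * e1 (n + 1) I) = a * X * e2 n 1"
      using q y2 unfolding X_def by algebra
    have k2: "a * c * (A' * B' * e2 (n + 2) 1) = a * c * (- (X * Y * e2 n 1))"
      using k1 y1 x1 unfolding Y_def by algebra
    show "A' * B' * e2 (n + 2) 1 = - (X * Y * e2 n 1)" using k2 mult_left_cancel[of "a * c"] cnz anz by (metis mult_eq_0_iff)
  qed
  show "(\<forall>i. 1 \<le> i \<and> i \<le> I \<longrightarrow> e1 (m + 2) i = \<rho> * e1 m i)
                 \<and> (\<forall>j. 1 \<le> j \<and> j \<le> J \<longrightarrow> e2 (m + 2) j = \<rho> * e2 m j)"
  proof (intro conjI allI impI)
    fix i assume i: "1 \<le> i \<and> i \<le> I"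
    define z where "z k = e1 (m + 2) k - \<rho> * e1 m k" for k
    have "z i = 0"
    proof (rule zero1[OF I3 _ _ _ R1nz])
      show "z 1 = 0" unfolding z_def using bc1[of m] bc1[of "m+2"] m1 by simp
      show "z I = 0" unfolding z_def using G1[OF m1] by simp
      fix k assume k: "2 \<le> k" "k \<le> I - 1"
      have "- (eta1 + eps1) * z (k - 1) + (1 + 2 * eps1 + gam1) * z k + (eta1 - eps1) * z (k + 1)
        = (- (eta1 + eps1) * e1 (m+2) (k - 1) + (1 + 2 * eps1 + gam1) * e1 (m+2) k + (eta1 - eps1) * e1 (m+2) (k + 1))
          - \<rho> * (- (eta1 + eps1) * e1 m (k - 1) + (1 + 2 * eps1 + gam1) * e1 m k + (eta1 - eps1) * e1 m (k + 1))"
        unfolding z_def by (simp add: algebra_simps)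
      then show "- (eta1 + eps1) * z (k - 1) + (1 + 2 * eps1 + gam1) * z k + (eta1 - eps1) * z (k + 1) = 0"
        using int1[OF m1 k] int1[of "m+2", OF _ k] by simp
    qed (use i in auto)
    then show "e1 (m + 2) i = \<rho> * e1 m i" unfolding z_def by simp
  next
    fix j assume j: "1 \<le> j \<and> j \<le> J"
    define z where "z k = e2 (m + 2) k - \<rho> * e2 m k" for k
    have "z j = 0"
    proof (rule zero2[OF J3 _ _ _ R2nz])
      show "z J = 0" unfolding z_def using bc2[of m] bc2[of "m+2"] m1 by simp
      show "z 1 = 0" unfolding z_def using G2[OF m1] by simp
      fix k assume k: "2 \<le> k" "k \<le> J - 1"
      have "- (eta2 + eps2) * z (k - 1) + (1 + 2 * eps2 + gam2) * z k + (eta2 - eps2) * z (k + 1)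
        = (- (eta2 + eps2) * e2 (m+2) (k - 1) + (1 + 2 * eps2 + gam2) * e2 (m+2) k + (eta2 - eps2) * e2 (m+2) (k + 1))
          - \<rho> * (- (eta2 + eps2) * e2 m (k - 1) + (1 + 2 * eps2 + gam2) * e2 m k + (eta2 - eps2) * e2 m (k + 1))"
        unfolding z_def by (simp add: algebra_simps)
      then show "- (eta2 + eps2) * z (k - 1) + (1 + 2 * eps2 + gam2) * z k + (eta2 - eps2) * z (k + 1) = 0"
        using int2[OF m1 k] int2[of "m+2", OF _ k] by simp
    qed (use j in auto)
    then show "e2 (m + 2) j = \<rho> * e2 m j" unfolding z_def by simp
  qed
qed

end
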